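(* Let $m>2$ and $k\ge3$ be integers, and let $r(m)\in(0,1)$ be the unique zero of $B_m$ in $(0,1)$. Let $c>0$ be small enough that $\ker L_{r(m)}\subset X^k_c$ is one-dimensional, and let $h_0$ span this kernel. Define $$\partial_rL_rh_0\big|_{r=r(m)}=\sum_{j\ge1}\frac{d}{dr}\Big(K_j(r)a_{j-2}+y_j(r)a_j+K_j(r)a_{j+2}\Big)\Big|_{r=r(m)}\sin(jx),$$ where $h_0=\sum_j a_j\cos(jx)$ is held fixed. Then $$\partial_rL_rh_0\big|_{r=r(m)}\notin\operatorname{Range}(L_{r(m)}).$$ In fact its $\sin(mx)$-coefficient is nonzero.
   Context: **Coefficients.** For integers $j\ge1$ and $r\in(0,1)$, let $$B_j(r)=-1-2r+2jr-r^2-\frac{(1-r)^j}{(1+r)^{j-2}},\qquad K_j(r)=-\frac{1-r}{8(1+r)^2}B_j(r),$$ $$y_1(r)=-\frac{3r+1}{4(1+r)^2},\qquad y_j(r)=\frac{B_j(r)}{4(1+r)}\ \ (j\ge2).$$ **The operator.** For $h=\sum_{j\ge1}a_j\cos(jx)$ define $$L_rh=\sum_{j\ge1}\big(K_j(r)a_{j-2}+y_j(r)a_j+K_j(r)a_{j+2}\big)\sin(jx),$$ with $a_j=0$ for $j\le0$. **Function spaces.** $X^k_c$ is the space of real $2\pi$-periodic $f=\sum_{j\ge1}a_j\cos(jx)$ extending analytically to $|\operatorname{Im}z|\le c$ with $$\sum_\pm\int|f(x\pm ic)|^2+\sum_\pm\int|\partial^kf(x\pm ic)|^2<\infty.$$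 $Y^{k}_c$ is defined in the same way with sines. *)

theory Defs
  imports "HOL-Analysis.Analysis"
begin

text \<open>Coefficients. The exponent j-2 may be negative (j = 1), hence powi.\<close>

definition Bc :: "nat \<Rightarrow> real \<Rightarrow> real" where
  "Bc j r = -1 - 2*r + 2 * real j * r - r^2 - (1 - r)^j / ((1 + r) powi (int j - 2))"

definition Kc :: "nat \<Rightarrow> real \<Rightarrow> real" where
  "Kc j r = - (1 - r) / (8 * (1 + r)^2) * Bc j r"

definition yc :: "nat \<Rightarrow> real \<Rightarrow> real" where
  "yc j r = (if j = 1 then - (3*r + 1) / (4 * (1 + r)^2) else Bc j r / (4 * (1 + r)))"

text \<open>A function h = sum_{j>=1} a_j cos(jx) is represented by its coefficient sequence
  a :: nat => real (with a 0 = 0); L_r h = sum_{j>=1} b_j sin(jx) is represented by the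
  sequence b (with b 0 = 0).  a_{j-2} = 0 for j <= 2.\<close>

definition Lop :: "real \<Rightarrow> (nat \<Rightarrow> real) \<Rightarrow> (nat \<Rightarrow> real)" where
  "Lop r a j = (if j = 0 then 0
     else Kc j r * (if j \<ge> 3 then a (j - 2) else 0) + yc j r * a j + Kc j r * a (j + 2))"

definition dLop :: "real \<Rightarrow> (nat \<Rightarrow> real) \<Rightarrow> (nat \<Rightarrow> real)" where
  "dLop r a j = deriv (\<lambda>s. Lop s a j) r"

text \<open>The space X^k_c, as a set of cosine coefficient sequences: the function
  f(x) = sum_{j>=1} a_j cos(jx) extends analytically (holomorphically on an open
  neighbourhood) to the closed strip |Im z| <= c, and the L^2 norms over one period of
  the extension and of its k-th derivative on the lines Im z = c and Im z = -c are finite.\<close>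

definition Xc :: "nat \<Rightarrow> real \<Rightarrow> (nat \<Rightarrow> real) set" where
  "Xc k c = {a. a 0 = 0 \<and>
     (\<exists>F S. open S \<and> {z. \<bar>Im z\<bar> \<le> c} \<subseteq> S \<and> F holomorphic_on S \<and>
        (\<forall>x::real. (\<lambda>j. complex_of_real (a j * cos (real j * x))) sums F (complex_of_real x)) \<and>
        (\<forall>\<sigma>\<in>{c, -c}.
           (\<lambda>x. (cmod (F (Complex x \<sigma>)))^2) integrable_on {0..2*pi} \<and>
           (\<lambda>x. (cmod ((deriv ^^ k) F (Complex x \<sigma>)))^2) integrable_on {0..2*pi}))}"

end

theory Submission
  imports Defs
begin

lemma Bc_alt:
  assumes "r > -1"
  shows "Bc j r = -1 - 2*r + 2 * real j * r - r^2 - (1+r)^2 * ((1-r)/(1+r))^j"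
proof -
  have "(1 + r) powi (int j - 2) = (1+r)^j / (1+r)^2"
    using assms by (simp add: power_int_diff)
  then show ?thesis using assms unfolding Bc_def by (simp add: power_divide field_simps)
qed

lemma Bc_mono:
  assumes "0 < r" "r < 1"
  shows "strict_mono (\<lambda>j. Bc j r)"
proof (rule strict_mono_Suc_iff[THEN iffD2], intro allI)
  fix j
  define q where "q = (1-r)/(1+r)"
  have q: "0 < q" "q < 1" using assms by (auto simp: q_def field_simps)
  have "Bc (Suc j) r - Bc j r = 2*r + (1+r)^2 * q^j * (1 - q)"
    using assms Bc_alt[of r j] Bc_alt[of r "Suc j"]
    by (simp add: q_def[symmetric] algebra_simps)
  moreover have "(1+r)^2 * q^j * (1 - q) \<ge> 0" using q by simp
  ultimately show "Bc j r < Bc (Suc j) r" using assms by linarith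
qed

lemma growth:
  fixes u :: "nat \<Rightarrow> real"
  assumes l: "l > 2" and rec: "\<And>n. u (n+2) = l * u (n+1) - u n"
    and "0 \<le> u 0" "u 0 \<le> u 1"
  shows "u n \<le> u (n+1) \<and> 0 \<le> u n \<and> u 1 \<le> u (n+1)"
proof (induction n)
  case 0 then show ?case using assms by simp
next
  case (Suc n)
  have "u (n+2) \<ge> (l - 1) * u (n+1)" using rec[of n] Suc by (simp add: algebra_simps)
  moreover have "(l-1) * u (n+1) \<ge> u (n+1)" using Suc l
    using mult_right_mono[of 1 "l-1" "u (n+1)"] by linarith
  ultimately show ?case using Suc by simp
qed

lemma growth_zero:
  fixes u :: "nat \<Rightarrow> real"
  assumes l: "l > 2" and rec: "\<And>n. u (n+2) = l * u (n+1) - u n"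
    and p: "0 \<le> u 0 * u 1" "\<bar>u 0\<bar> \<le> \<bar>u 1\<bar>" and lim: "u \<longlonglongrightarrow> 0"
  shows "u n = 0"
proof -
  have pos: False if "u 1 > 0" "0 \<le> u 0" "u 0 \<le> u 1" "\<And>n. u (n+2) = l * u (n+1) - u n" "u \<longlonglongrightarrow> 0" for u
  proof -
    have "\<forall>n. u 1 \<le> u (n+1)" using growth[of l u, OF l] that by blast
    moreover have "(\<lambda>n. u (n+1)) \<longlonglongrightarrow> 0" using LIMSEQ_Suc[OF that(5)] by simp
    ultimately have "u 1 \<le> 0" by (intro LIMSEQ_le_const[of _ 0]) auto
    then show False using that by simp
  qed
  have "u 1 = 0"
  proof (rule ccontr)
    assume "u 1 \<noteq> 0"
    then consider "u 1 > 0" | "u 1 < 0" by linarith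
    then show False
    proof cases
      case 1
      then have "0 \<le> u 0" using p by (simp add: zero_le_mult_iff)
      then show False using pos[of u] 1 p rec lim by auto
    next
      case 2
      then have "u 0 \<le> 0" using p by (simp add: zero_le_mult_iff)
      then show False using pos[of "\<lambda>n. - u n"] 2 p rec lim tendsto_minus[OF lim] by auto
    qed
  qed
  then have "u 0 = 0" using p by simp
  have "u n = 0 \<and> u (n+1) = 0" for n
    by (induction n) (use \<open>u 0 = 0\<close> \<open>u 1 = 0\<close> rec in auto)
  then show ?thesis by simp
qed

lemma Bc_big:
  assumes "m \<ge> 3"
  shows "Bc m x = -1 - 2*x + 2 * real m * x - x^2 - (1 - x)^m / (1 + x)^(m-2)"
proof -
  have e: "int m - 2 = int (m-2)" using assms by simp
  have "(1+x) powi (int m - 2) = (1+x)^(m-2)" unfolding e by (rule power_int_of_nat)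
  then show ?thesis unfolding Bc_def by (simp only:)
qed

lemma Bc_deriv:
  assumes "m \<ge> 3" "0 < r" "r < 1"
  shows "\<exists>D>0. ((\<lambda>s. Bc m s) has_real_derivative D) (at r)"
proof -
  have f1: "((\<lambda>x. 1 - x) has_real_derivative -1) (at r)"
    using DERIV_diff[OF DERIV_const[of 1] DERIV_ident] by simp
  have f2: "((\<lambda>x. 1 + x) has_real_derivative 1) (at r)"
    using DERIV_add[OF DERIV_const[of 1] DERIV_ident] by simp
  note n1 = DERIV_power[OF f1, of m]
  note n2 = DERIV_power[OF f2, of "m-2"]
  have nz: "(1 + r) ^ (m-2) \<noteq> 0" using assms by simp
  note q = DERIV_quotient[OF n1 n2 nz]
  define E where "E = (of_nat m * (- 1 * (1 - r) ^ (m - Suc 0)) * (1 + r) ^ (m - 2) -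
      of_nat (m - 2) * (1 * (1 + r) ^ (m - 2 - Suc 0)) * (1 - r) ^ m) / ((1 + r) ^ (m - 2)) ^ Suc (Suc 0)"
  have q': "((\<lambda>x. (1 - x) ^ m / (1 + x) ^ (m-2)) has_real_derivative E) (at r)"
    using q unfolding E_def .
  have p: "((\<lambda>x. -1 - 2*x + 2 * real m * x - x^2) has_real_derivative (-2 + 2 * real m - 2 * r)) (at r)"
    by (auto intro!: derivative_eq_intros)
  have eq: "(\<lambda>x. Bc m x) = (\<lambda>x. (-1 - 2*x + 2 * real m * x - x^2) - (1 - x)^m / (1 + x)^(m-2))"
    using Bc_big[OF assms(1)] by auto
  have d: "((\<lambda>x. Bc m x) has_real_derivative ((-2 + 2 * real m - 2 * r) - E)) (at r)"
    unfolding eq by (rule DERIV_diff[OF p q'])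
  have "0 \<le> real m * (1-r)^(m - Suc 0) * (1+r)^(m-2)" "0 \<le> real (m-2) * (1+r)^(m-2-Suc 0) * (1-r)^m"
    using assms by auto
  then have "E \<le> 0" unfolding E_def
    by (intro divide_nonpos_nonneg) auto
  moreover have "-2 + 2 * real m - 2*r > 0" using assms by auto
  ultimately show ?thesis using d by (intro exI[of _ "(-2 + 2 * real m - 2 * r) - E"]) auto
qed

lemma aux1: fixes p q S A :: real assumes "p > 0"
  shows "(8*p^2) * (-q/(8*p^2) * S + A/(4*p)) = -q*S + 2*p*A"
  using assms by (simp add: field_simps power2_eq_square)
lemma aux2: fixes p q S A :: real assumes "p > 0"
  shows "(4*p^2) * (q/(4*p^2) * S - A/(4*p^2)) = q*S - A"
  using assms by (simp add: field_simps power2_eq_square)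

lemma row_eq:
  assumes "j \<ge> 2" "0 < r" "r < 1" "Bc j r \<noteq> 0" "Lop r a j = 0"
  shows "(if j \<ge> 3 then a (j - 2) else 0) + a (j + 2) = 2*(1+r)/(1-r) * a j"
proof -
  define X where "X = (if j \<ge> 3 then a (j - 2) else 0)"
  have "Lop r a j = Bc j r * (-(1-r)/(8*(1+r)^2) * (X + a (j+2)) + a j / (4*(1+r)))"
    using assms(1) unfolding Lop_def Kc_def yc_def X_def by (simp add: algebra_simps)
  then have e: "-(1-r)/(8*(1+r)^2) * (X + a (j+2)) + a j / (4*(1+r)) = 0"
    using assms by simp
  have "(8*(1+r)^2) * (-(1-r)/(8*(1+r)^2) * (X + a (j+2)) + a j / (4*(1+r))) = -(1-r)*(X + a (j+2)) + 2*(1+r)*a j"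
    using assms aux1[of "1+r" "1-r" "X + a (j+2)" "a j"] by simp
  then have "-(1-r)*(X + a (j+2)) + 2*(1+r)*a j = 0" using e by simp
  then show ?thesis using assms unfolding X_def[symmetric] by (simp add: field_simps)
qed

lemma row1:
  assumes "0 < r" "r < 1" "Lop r a 1 = 0"
  shows "a 3 = (3*r+1)/(1-r) * a 1"
proof -
  have p: "1 + r \<noteq> 0" "(1+r)^2 \<noteq> 0" using assms by auto
  have B1: "Bc 1 r = -2" unfolding Bc_def using assms
    by (simp add: power_int_minus field_simps power2_eq_square)
  have K1: "Kc 1 r = (1-r)/(4*(1+r)^2)" unfolding Kc_def B1 using p by (simp add: field_simps)
  have y1: "yc 1 r = -(3*r+1)/(4*(1+r)^2)" by (simp add: yc_def)
  have "Lop r a 1 = Kc 1 r * a 3 + yc 1 r * a 1" by (simp add: Lop_def numeral_3_eq_3)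
  then have e: "(1-r)/(4*(1+r)^2) * a 3 + (-(3*r+1)/(4*(1+r)^2)) * a 1 = 0"
    using assms(3) K1 y1 by simp
  have "(4*(1+r)^2) * ((1-r)/(4*(1+r)^2) * a 3 + (-(3*r+1)/(4*(1+r)^2)) * a 1) = (1-r) * a 3 - (3*r+1) * a 1"
    using p by (simp add: field_simps)
  then have "(1-r) * a 3 - (3*r+1) * a 1 = 0" using e by simp
  then show ?thesis using assms by (simp add: field_simps)
qed

lemma Lop_m:
  assumes "m \<ge> 3" "Bc m r = 0"
  shows "Lop r h m = 0"
  using assms unfolding Lop_def Kc_def yc_def by simp

theorem mainTheorem10:
  fixes m k :: nat and r c :: real and h0 :: "nat \<Rightarrow> real"
  assumes "m > 2" and "k \<ge> 3"
    and "0 < r" and "r < 1" and "Bc m r = 0"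
    and "\<forall>s. 0 < s \<and> s < 1 \<and> Bc m s = 0 \<longrightarrow> s = r"
    and "c > 0"
    and "h0 \<in> Xc k c" and "h0 \<noteq> (\<lambda>j. 0)"
    and "{h \<in> Xc k c. Lop r h = (\<lambda>j. 0)} = {(\<lambda>j. t * h0 j) | t. True}"
  shows "dLop r h0 \<notin> Lop r ` Xc k c \<and> dLop r h0 m \<noteq> 0"
proof -
  note r = assms(3,4)
  have m3: "m \<ge> 3" using assms(1) by simp
  have "h0 \<in> {(\<lambda>j. t * h0 j) | t. True}" by (auto intro!: exI[of _ 1])
  then have L0: "Lop r h0 j = 0" for j using assms(10) by (metis (mono_tags, lifting) mem_Collect_eq)
  obtain F where a0: "h0 0 = 0" and F: "\<forall>x::real. (\<lambda>j. complex_of_real (h0 j * cos (real j * x))) sums F (complex_of_real x)"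
    using assms(8) unfolding Xc_def by blast
  have "summable (\<lambda>j. complex_of_real (h0 j))" using F[rule_format, of 0] sums_summable by force
  then have "(\<lambda>j. complex_of_real (h0 j)) \<longlonglongrightarrow> 0" by (rule summable_LIMSEQ_zero)
  then have lim: "h0 \<longlonglongrightarrow> 0" using tendsto_of_real_iff[where 'a=complex, of h0 0 sequentially] by simp
  have Bj: "Bc j r \<noteq> 0" if "j \<noteq> m" for j
    using strict_mono_eq[OF Bc_mono[OF r], of j m] assms(5) that by simp
  define l where "l = 2*(1+r)/(1-r)"
  have l2: "l > 2" using r unfolding l_def by (simp add: field_simps)
  define G where "G = (\<lambda>x. -(1-x)/(8*(1+x)^2) * (h0 (m-2) + h0 (m+2)) + h0 m * (1 / (4*(1+x))))"
  have LG: "(\<lambda>x. Lop x h0 m) = (\<lambda>x. Bc m x * G x)"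
  proof
    fix x
    have "Kc m x = Bc m x * (-(1-x)/(8*(1+x)^2))" by (simp add: Kc_def)
    moreover have "yc m x = Bc m x * (1 / (4*(1+x)))" using m3 by (simp add: yc_def)
    moreover have "Lop x h0 m = Kc m x * h0 (m-2) + yc m x * h0 m + Kc m x * h0 (m+2)"
      using m3 by (simp add: Lop_def)
    ultimately show "Lop x h0 m = Bc m x * G x" unfolding G_def by (simp only: ring_distribs mult_ac)
  qed
  obtain D where D: "D > 0" "((\<lambda>x. Bc m x) has_real_derivative D) (at r)"
    using Bc_deriv[OF m3 r] by blast
  have "\<exists>G'. (G has_real_derivative G') (at r)"
    unfolding G_def using r by (intro exI) (auto intro!: derivative_eq_intros)
  then obtain G' where G': "(G has_real_derivative G') (at r)" by blast
  have "dLop r h0 m = D * G r"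
    unfolding dLop_def LG using DERIV_mult[OF D(2) G'] assms(5) by (auto intro: DERIV_imp_deriv)
  have dm: "dLop r h0 m \<noteq> 0"
  proof
    assume "dLop r h0 m = 0"
    then have "G r = 0" using \<open>dLop r h0 m = D * G r\<close> D by simp
    moreover have "(8*(1+r)^2) * G r = -(1-r)*(h0 (m-2) + h0 (m+2)) + 2*(1+r)*h0 m"
      using r aux1[of "1+r" "1-r" "h0 (m-2) + h0 (m+2)" "h0 m"] unfolding G_def by simp
    ultimately have "-(1-r)*(h0 (m-2) + h0 (m+2)) + 2*(1+r)*h0 m = 0" by simp
    then have recm: "h0 (m-2) + h0 (m+2) = l * h0 m"
      using r unfolding l_def by (simp add: field_simps)
    have rec: "(if j \<ge> 3 then h0 (j - 2) else 0) + h0 (j + 2) = l * h0 j" if "j \<ge> 2" for j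
    proof (cases "j = m")
      case True then show ?thesis using recm m3 by simp
    next
      case False then show ?thesis using row_eq[OF that r Bj[OF False] L0] unfolding l_def by simp
    qed
    have r1: "h0 3 = (3*r+1)/(1-r) * h0 1" using row1[OF r L0] .
    have ev: "h0 (2*n) = 0" for n
    proof (rule growth_zero[of l "\<lambda>n. h0 (2*n)", OF l2])
      show "h0 (2 * (n + 2)) = l * h0 (2 * (n + 1)) - h0 (2 * n)" for n
        using rec[of "2*n+2"] a0 by (cases n) (auto simp: algebra_simps)
      show "0 \<le> h0 (2 * 0) * h0 (2 * 1)" "\<bar>h0 (2 * 0)\<bar> \<le> \<bar>h0 (2 * 1)\<bar>" using a0 by auto
      show "(\<lambda>n. h0 (2 * n)) \<longlonglongrightarrow> 0"
        using LIMSEQ_subseq_LIMSEQ[OF lim, of "\<lambda>n. 2*n"] by (simp add: strict_mono_def o_def)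
    qed
    have od: "h0 (2*n+1) = 0" for n
    proof (rule growth_zero[of l "\<lambda>n. h0 (2*n+1)", OF l2])
      show "h0 (2 * (n + 2) + 1) = l * h0 (2 * (n + 1) + 1) - h0 (2 * n + 1)" for n
      proof -
        have e: "h0 (2*n+1) + h0 (2*n+5) = l * h0 (2*n+3)" using rec[of "2*n+3"] by (simp add: add.commute)
        have q: "2 * (n + 2) + 1 = 2*n+5" "2 * (n + 1) + 1 = 2*n+3" by simp_all
        show ?thesis unfolding q using e by linarith
      qed
      have k1: "(3*r+1)/(1-r) \<ge> 1" using r by (simp add: field_simps)
      have q: "2 * 0 + 1 = (1::nat)" "2 * 1 + 1 = (3::nat)" by simp_all
      have "h0 1 * h0 3 = (3*r+1)/(1-r) * (h0 1 * h0 1)" using r1 by simp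
      then show "0 \<le> h0 (2 * 0 + 1) * h0 (2 * 1 + 1)" unfolding q using k1 r by simp
      have "\<bar>h0 3\<bar> = (3*r+1)/(1-r) * \<bar>h0 1\<bar>" using r1 k1 r by (simp add: abs_mult)
      then show "\<bar>h0 (2 * 0 + 1)\<bar> \<le> \<bar>h0 (2 * 1 + 1)\<bar>" unfolding q
        using k1 mult_right_mono[OF k1, of "\<bar>h0 1\<bar>"] by simp
      show "(\<lambda>n. h0 (2 * n + 1)) \<longlonglongrightarrow> 0"
        using LIMSEQ_subseq_LIMSEQ[OF lim, of "\<lambda>n. 2*n+1"] by (simp add: strict_mono_def o_def)
    qed
    have "h0 j = 0" for j
    proof (cases "even j")
      case True then show ?thesis using ev by (auto elim: evenE)
    next
      case False then show ?thesis using od by (auto elim: oddE)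
    qed
    then show False using assms(9) by auto
  qed
  moreover have "dLop r h0 \<notin> Lop r ` Xc k c"
    using dm Lop_m[OF m3 assms(5)] by (auto dest: fun_cong[where x=m])
  ultimately show ?thesis by simp
qed

end
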